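(* Assume $k>1$. (1) $r=e-k$ if and only if $v(R)\setminus v(xR:\mathfrak m)=\{0,y_1,\dots,y_{k-1}\}$. (2) If $r<e-1$, then (a) $2y_1<c+e$, and (b) $p\le 2l_1+2$, and $p=2l_1+2$ implies $h>0$. (3) If $r=e-k$, then (a) $y_1+y_j<c+e$ for every $j=1,\dots,k-1$, and (b) $p\le l_1+l_{k-1}+2$, and $p=l_1+l_{k-1}+2$ implies $h>0$. (4) If $p\ge3$ and $i$ is such that $l_i=0$, then $2y_i>c+e$.
   Context: Let $(R,\mathfrak m)$ be a one-dimensional local Noetherian domain with quotient field $K$, not regular, analytically irreducible (the integral closure $\overline R$ of $R$ in $K$ is a DVR and a finite $R$-module) and residually rational. Let $v$ be the valuation of $\overline R$ normalized so a uniformizer $t$ has value 1, $v(R)=\{v(a):a\in R\setminus\{0\}\}$, $\mathfrak C=(R:_K\overline R)=t^c\overline R$ with $c$ the least element of $v(R)$ with $c+\mathbb N\subseteq v(R)$, $r=\ell_R((R:_K\mathfrak m)/R)$, $e$ the least positive element of $v(R)$. Let $x\in\mathfrak m$ with $v(x)=e$, $k=\ell_R(R/(\mathfrak C+xR))$, $(xR:\mathfrak m)=\{a\in K:a\mathfrak m\subseteq xR\}$ (an ideal of $R$) with value set $v(xR:\mathfrak m)$. When $k>1$: $p$ is the integer with $c-e\le pe<c$, $h=(p+1)e-c$; $y_1<\dots<y_{k-1}$ are the nonzero elements of $v(R)\setminus v(\mathfrak C+xR)$ (equivalently the $y\in v(R)$ with $0<y<c$ and $y-e\notin v(R)$); $l_i\ge0$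 is the integer with $y_i+l_ie<c\le y_i+(l_i+1)e$. *)

theory Defs
  imports "HOL-Computational_Algebra.Polynomial"
begin

text \<open>The ambient field K is the whole type 'a; R is a subset of it. All sets below are
subsets of K. v is the normalized discrete valuation of K (its value at 0 is irrelevant).\<close>

definition subring :: "'a::field set \<Rightarrow> bool" where
  "subring R \<longleftrightarrow> 0 \<in> R \<and> 1 \<in> R \<and> (\<forall>a\<in>R. \<forall>b\<in>R. a + b \<in> R \<and> a * b \<in> R \<and> - a \<in> R)"

definition submod :: "'a::field set \<Rightarrow> 'a set \<Rightarrow> bool" where
  "submod R M \<longleftrightarrow> 0 \<in> M \<and> (\<forall>a\<in>M. \<forall>b\<in>M. a + b \<in> M) \<and> (\<forall>r\<in>R. \<forall>a\<in>M. r * a \<in> M)"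

definition ideal_of :: "'a::field set \<Rightarrow> 'a set \<Rightarrow> bool" where
  "ideal_of R I \<longleftrightarrow> I \<subseteq> R \<and> submod R I"

definition prime_ideal_of :: "'a::field set \<Rightarrow> 'a set \<Rightarrow> bool" where
  "prime_ideal_of R P \<longleftrightarrow> ideal_of R P \<and> P \<noteq> R \<and> (\<forall>a\<in>R. \<forall>b\<in>R. a * b \<in> P \<longrightarrow> a \<in> P \<or> b \<in> P)"

definition gen_by :: "'a::field set \<Rightarrow> 'a set \<Rightarrow> 'a set" where
  "gen_by R F = {(\<Sum>f\<in>F. g f * f) | g. \<forall>f\<in>F. g f \<in> R}"

definition noetherian :: "'a::field set \<Rightarrow> bool" where
  "noetherian R \<longleftrightarrow> (\<forall>I. ideal_of R I \<longrightarrow> (\<exists>F. finite F \<and> F \<subseteq> I \<and> I = gen_by R F))"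

definition krull_dim_one :: "'a::field set \<Rightarrow> bool" where
  "krull_dim_one R \<longleftrightarrow>
     (\<exists>P0 P1. prime_ideal_of R P0 \<and> prime_ideal_of R P1 \<and> P0 \<subset> P1) \<and>
     \<not> (\<exists>P0 P1 P2. prime_ideal_of R P0 \<and> prime_ideal_of R P1 \<and> prime_ideal_of R P2 \<and>
           P0 \<subset> P1 \<and> P1 \<subset> P2)"

definition local_ring :: "'a::field set \<Rightarrow> 'a set \<Rightarrow> bool" where
  "local_ring R m \<longleftrightarrow> ideal_of R m \<and> m \<noteq> R \<and> (\<forall>a\<in>R - m. \<exists>b\<in>R. a * b = 1)"

definition quotient_field_is_K :: "'a::field set \<Rightarrow> bool" where
  "quotient_field_is_K R \<longleftrightarrow> (\<forall>a. \<exists>b\<in>R. \<exists>d\<in>R. d \<noteq> 0 \<and> a = b / d)"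

definition integral_over :: "'a::field set \<Rightarrow> 'a \<Rightarrow> bool" where
  "integral_over R a \<longleftrightarrow> (\<exists>p. lead_coeff p = 1 \<and> (\<forall>i. coeff p i \<in> R) \<and> poly p a = 0)"

definition discrete_valuation :: "('a::field \<Rightarrow> int) \<Rightarrow> bool" where
  "discrete_valuation v \<longleftrightarrow>
     (\<forall>a b. a \<noteq> 0 \<longrightarrow> b \<noteq> 0 \<longrightarrow> v (a * b) = v a + v b) \<and>
     (\<forall>a b. a \<noteq> 0 \<longrightarrow> b \<noteq> 0 \<longrightarrow> a + b \<noteq> 0 \<longrightarrow> min (v a) (v b) \<le> v (a + b)) \<and>
     (\<exists>t. t \<noteq> 0 \<and> v t = 1)"

definition val_ring :: "('a::field \<Rightarrow> int) \<Rightarrow> 'a set" where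
  "val_ring v = {a. a = 0 \<or> 0 \<le> v a}"

text \<open>residually rational: the residue field of R equals that of the valuation ring\<close>
definition residually_rational :: "'a::field set \<Rightarrow> ('a \<Rightarrow> int) \<Rightarrow> bool" where
  "residually_rational R v \<longleftrightarrow> (\<forall>a\<in>val_ring v. \<exists>b\<in>R. a = b \<or> 0 < v (a - b))"

definition valset :: "('a::field \<Rightarrow> int) \<Rightarrow> 'a set \<Rightarrow> int set" where
  "valset v A = {v a | a. a \<in> A \<and> a \<noteq> 0}"

definition colon :: "'a::field set \<Rightarrow> 'a set \<Rightarrow> 'a set" where
  "colon A B = {a. \<forall>b\<in>B. a * b \<in> A}"

definition smul_set :: "'a::field \<Rightarrow> 'a set \<Rightarrow> 'a set" where
  "smul_set x A = {x * a | a. a \<in> A}"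

definition sum_set :: "'a::field set \<Rightarrow> 'a set \<Rightarrow> 'a set" where
  "sum_set A B = {a + b | a b. a \<in> A \<and> b \<in> B}"

definition mod_length :: "'a::field set \<Rightarrow> 'a set \<Rightarrow> 'a set \<Rightarrow> nat" where
  "mod_length R B A = Sup {n. \<exists>L::nat \<Rightarrow> 'a set. L 0 = A \<and> L n = B \<and>
       (\<forall>i\<le>n. submod R (L i)) \<and> (\<forall>i<n. L i \<subset> L (Suc i))}"

end

theory Submission
  imports Defs
begin



lemma int_least:
  assumes "P (n0::int)" "\<And>n. P n \<Longrightarrow> 0 \<le> n"
  shows "P (LEAST n. P n) \<and> (\<forall>n. P n \<longrightarrow> (LEAST n. P n) \<le> n)"
proof -
  have ex: "\<exists>k::nat. P (int k)" using assms by (metis nonneg_int_cases)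
  define k0 where "k0 = (LEAST k::nat. P (int k))"
  have P0: "P (int k0)" unfolding k0_def by (rule LeastI_ex[OF ex])
  have le: "\<forall>n. P n \<longrightarrow> int k0 \<le> n"
  proof (intro allI impI)
    fix n assume "P n"
    then obtain k where "n = int k" using assms(2) by (metis nonneg_int_cases)
    with \<open>P n\<close> have "k0 \<le> k" unfolding k0_def by (simp add: Least_le)
    thus "int k0 \<le> n" using \<open>n = int k\<close> by simp
  qed
  have "(LEAST n. P n) = int k0"
    by (rule Least_equality) (use P0 le in auto)
  thus ?thesis using P0 le by simp
qed

definition Dge :: "('a::field \<Rightarrow> int) \<Rightarrow> int \<Rightarrow> 'a set" where
  "Dge v T = {z. z = 0 \<or> T \<le> v z}"

locale vr =
  fixes R m :: "'a::field set" and v :: "'a \<Rightarrow> int"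
  assumes subring: "subring R"
    and quot_field: "quotient_field_is_K R"
    and local: "local_ring R m"
    and dval: "discrete_valuation v"
    and int_closure: "\<forall>a. integral_over R a \<longleftrightarrow> a \<in> val_ring v"
    and finite_closure: "\<exists>F. finite F \<and> F \<subseteq> val_ring v \<and> val_ring v = gen_by R F"
    and res_rat: "residually_rational R v"
begin

lemma vmult: "a \<noteq> 0 \<Longrightarrow> b \<noteq> 0 \<Longrightarrow> v (a*b) = v a + v b"
  using dval unfolding discrete_valuation_def by blast

lemma ultra: "a \<noteq> 0 \<Longrightarrow> b \<noteq> 0 \<Longrightarrow> a + b \<noteq> 0 \<Longrightarrow> min (v a) (v b) \<le> v (a + b)"
  using dval unfolding discrete_valuation_def by blast

lemma v1: "v 1 = 0"
  using vmult[of 1 1] by simp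

lemma vinv: "a \<noteq> 0 \<Longrightarrow> v (inverse a) = - v a"
  using vmult[of a "inverse a"] v1 by simp

lemma vdiv: "a \<noteq> 0 \<Longrightarrow> b \<noteq> 0 \<Longrightarrow> v (a / b) = v a - v b"
  by (simp add: divide_inverse vmult vinv)

lemma vm1: "v (-1) = 0"
  using vmult[of "-1" "-1"] v1 by simp

lemma vneg: "a \<noteq> 0 \<Longrightarrow> v (- a) = v a"
  using vmult[of "-1" a] vm1 by simp

lemma vpow: "a \<noteq> 0 \<Longrightarrow> v (a ^ n) = int n * v a"
  by (induction n) (auto simp: vmult v1 algebra_simps)

lemma ultra_diff: "a \<noteq> 0 \<Longrightarrow> b \<noteq> 0 \<Longrightarrow> a - b \<noteq> 0 \<Longrightarrow> min (v a) (v b) \<le> v (a - b)"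
  using ultra[of a "-b"] vneg[of b] by simp

lemma ultra_strict:
  assumes "a \<noteq> 0" "b \<noteq> 0" "v a < v b"
  shows "a + b \<noteq> 0" "v (a + b) = v a"
proof -
  show ab: "a + b \<noteq> 0"
  proof
    assume "a + b = 0" hence "b = - a" by (simp add: eq_neg_iff_add_eq_0 add.commute)
    thus False using assms vneg by simp
  qed
  have 1: "min (v a) (v b) \<le> v (a + b)" using ultra assms ab by blast
  have "a = (a + b) - b" by simp
  hence "min (v (a+b)) (v b) \<le> v a" using ultra_diff[of "a+b" b] assms ab by simp
  thus "v (a + b) = v a" using 1 assms by linarith
qed

lemma exists_val: "\<exists>a. a \<noteq> 0 \<and> v a = n"
proof -
  obtain t where t: "t \<noteq> 0" "v t = 1" using dval unfolding discrete_valuation_def by blast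
  show ?thesis
  proof (cases "0 \<le> n")
    case True
    thus ?thesis using t vpow[of t "nat n"] by (intro exI[of _ "t ^ nat n"]) auto
  next
    case False
    thus ?thesis using t vpow[of t "nat (-n)"] vinv[of "t ^ nat (-n)"]
      by (intro exI[of _ "inverse (t ^ nat (-n))"]) auto
  qed
qed

lemma R0: "0 \<in> R" and R1: "1 \<in> R"
  and Radd: "a \<in> R \<Longrightarrow> b \<in> R \<Longrightarrow> a + b \<in> R"
  and Rmult: "a \<in> R \<Longrightarrow> b \<in> R \<Longrightarrow> a * b \<in> R"
  and Rneg: "a \<in> R \<Longrightarrow> - a \<in> R"
  using subring unfolding subring_def by auto

lemma Rdiff: "a \<in> R \<Longrightarrow> b \<in> R \<Longrightarrow> a - b \<in> R"
  using Radd[of a "-b"] Rneg[of b] by simp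

lemma Rsum: "(\<And>f. f \<in> F \<Longrightarrow> h f \<in> R) \<Longrightarrow> sum h F \<in> R"
proof (induction F rule: infinite_finite_induct)
  case (infinite A) thus ?case using R0 by simp
next
  case empty thus ?case using R0 by simp
next
  case (insert x F) thus ?case using Radd by simp
qed

lemma Rpow: "a \<in> R \<Longrightarrow> a ^ n \<in> R"
  by (induction n) (auto simp: R1 Rmult)

lemma R_valring: "a \<in> R \<Longrightarrow> a \<in> val_ring v"
proof -
  assume a: "a \<in> R"
  have "integral_over R a"
    unfolding integral_over_def
  proof (intro exI[of _ "[:-a, 1:]"] conjI allI)
    fix i show "coeff [:-a, 1:] i \<in> R"
      using a Rneg R0 R1 by (cases i) (auto simp: coeff_pCons split: nat.splits)
  qed auto
  thus ?thesis using int_closure by blast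
qed

lemma Rnonneg: "a \<in> R \<Longrightarrow> a \<noteq> 0 \<Longrightarrow> 0 \<le> v a"
  using R_valring unfolding val_ring_def by auto

end



lemma submodD: assumes "submod R M"
  shows "0 \<in> M" "a \<in> M \<Longrightarrow> b \<in> M \<Longrightarrow> a + b \<in> M" "r \<in> R \<Longrightarrow> a \<in> M \<Longrightarrow> r * a \<in> M"
  using assms unfolding submod_def by auto

context vr begin

lemma submod_R: "submod R R"
  unfolding submod_def using R0 Radd Rmult by auto

lemma submod_neg: "submod R M \<Longrightarrow> a \<in> M \<Longrightarrow> - a \<in> M"
  using submodD(3)[of R M "-1" a] R1 Rneg by auto

lemma submod_diff: "submod R M \<Longrightarrow> a \<in> M \<Longrightarrow> b \<in> M \<Longrightarrow> a - b \<in> M"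
  using submodD(2)[of R M a "-b"] submod_neg[of M b] by simp

lemma conductor_elem: "\<exists>d\<in>R. d \<noteq> 0 \<and> (\<forall>w\<in>val_ring v. d * w \<in> R)"
proof -
  obtain F where F: "finite F" "F \<subseteq> val_ring v" "val_ring v = gen_by R F"
    using finite_closure by blast
  have "\<exists>d\<in>R. d \<noteq> 0 \<and> (\<forall>f\<in>G. d * f \<in> R)" if "finite G" for G :: "'a set"
    using that
  proof (induction G rule: finite_induct)
    case empty thus ?case using R1 by (intro bexI[of _ 1]) auto
  next
    case (insert f G)
    then obtain d where d: "d \<in> R" "d \<noteq> 0" "\<forall>g\<in>G. d * g \<in> R" by blast
    obtain b d' where bd: "b \<in> R" "d' \<in> R" "d' \<noteq> 0" "f = b / d'"
      using quot_field unfolding quotient_field_is_K_def by blast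
    have "\<forall>g\<in>insert f G. (d * d') * g \<in> R"
    proof
      fix g assume "g \<in> insert f G"
      then consider "g = f" | "g \<in> G" by blast
      thus "(d * d') * g \<in> R"
      proof cases
        case 1 thus ?thesis using bd d Rmult by simp
      next
        case 2
        hence "d' * (d * g) \<in> R" using d bd Rmult[of d' "d * g"] by blast
        thus ?thesis by (simp add: ac_simps)
      qed
    qed
    thus ?case using d bd Rmult by (intro bexI[of _ "d * d'"]) auto
  qed
  then obtain d where d: "d \<in> R" "d \<noteq> 0" "\<forall>f\<in>F. d * f \<in> R" using F by blast
  have "\<forall>w\<in>val_ring v. d * w \<in> R"
  proof
    fix w assume "w \<in> val_ring v"
    then obtain g where g: "w = (\<Sum>f\<in>F. g f * f)" "\<forall>f\<in>F. g f \<in> R"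
      using F unfolding gen_by_def by blast
    have "d * w = (\<Sum>f\<in>F. g f * (d * f))" unfolding g by (simp add: sum_distrib_left ac_simps)
    also have "\<dots> \<in> R" by (intro Rsum) (use g d Rmult in blast)
    finally show "d * w \<in> R" .
  qed
  thus ?thesis using d by blast
qed

lemma Dge_mono: "T \<le> T' \<Longrightarrow> Dge v T' \<subseteq> Dge v T"
  unfolding Dge_def by auto

lemma D_in_R: "\<exists>T0\<ge>0. Dge v T0 \<subseteq> R"
proof -
  obtain d where d: "d \<in> R" "d \<noteq> 0" "\<forall>w\<in>val_ring v. d * w \<in> R" using conductor_elem by blast
  have "Dge v (v d) \<subseteq> R"
  proof
    fix z assume "z \<in> Dge v (v d)"
    show "z \<in> R"
    proof (cases "z = 0")
      case True thus ?thesis using R0 by simp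
    next
      case False
      hence "v d \<le> v z" using \<open>z \<in> Dge v (v d)\<close> unfolding Dge_def by auto
      hence "z / d \<in> val_ring v" using False d vdiv unfolding val_ring_def by auto
      hence "d * (z / d) \<in> R" using d by blast
      thus ?thesis using d by simp
    qed
  qed
  thus ?thesis using Rnonneg d by blast
qed

lemma submod_Dge: "submod R (Dge v T)"
  unfolding submod_def
proof (intro conjI ballI)
  show "0 \<in> Dge v T" unfolding Dge_def by simp
next
  fix a b assume a: "a \<in> Dge v T" and b: "b \<in> Dge v T"
  show "a + b \<in> Dge v T"
  proof (cases "a = 0 \<or> b = 0 \<or> a + b = 0")
    case True thus ?thesis using a b unfolding Dge_def by auto
  next
    case False thus ?thesis using a b ultra[of a b] unfolding Dge_def by auto
  qed
next
  fix r a assume r: "r \<in> R" and a: "a \<in> Dge v T"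
  show "r * a \<in> Dge v T"
    using a Rnonneg[OF r] vmult[of r a] unfolding Dge_def by (cases "r = 0 \<or> a = 0") auto
qed

lemma approx:
  assumes A: "submod R A" and B: "submod R B" and AB: "A \<subseteq> B" and DA: "Dge v T \<subseteq> A"
    and vals: "\<forall>b\<in>B. b \<noteq> 0 \<longrightarrow> v b \<in> valset v A"
  shows "B \<subseteq> A"
proof
  fix b assume "b \<in> B"
  thus "b \<in> A"
  proof (induction "nat (T - v b)" arbitrary: b rule: less_induct)
    case less
    show ?case
    proof (cases "b = 0 \<or> T \<le> v b")
      case True thus ?thesis using DA unfolding Dge_def by auto
    next
      case False
      hence b0: "b \<noteq> 0" and bT: "v b < T" by auto
      obtain a' where a': "a' \<in> A" "a' \<noteq> 0" "v a' = v b"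
        using vals less.prems b0 unfolding valset_def by force
      define q where "q = b / a'"
      have vq: "v q = 0" using vdiv[OF b0 a'(2)] a' unfolding q_def by simp
      hence "q \<in> val_ring v" unfolding val_ring_def by simp
      then obtain u where u: "u \<in> R" "q = u \<or> 0 < v (q - u)"
        using res_rat unfolding residually_rational_def by blast
      have ua: "u * a' \<in> A" using submodD(3)[OF A u(1) a'(1)] .
      define b' where "b' = b - u * a'"
      have bb: "b = b' + u * a'" unfolding b'_def by simp
      have b'B: "b' \<in> B" unfolding b'_def using submod_diff[OF B less.prems] ua AB by auto
      have b'q: "b' = a' * (q - u)" unfolding b'_def q_def using a'(2) by (simp add: algebra_simps)
      show ?thesis
      proof (cases "b' = 0")
        case True thus ?thesis using bb ua by simp
      next
        case False
        hence qu: "q - u \<noteq> 0" using b'q by auto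
        hence "0 < v (q - u)" using u(2) by auto
        hence "v b' > v b" using vmult[OF a'(2) qu] b'q a' by simp
        hence "nat (T - v b') < nat (T - v b)" using bT by simp
        hence "b' \<in> A" using less.hyps b'B by blast
        thus ?thesis using bb ua submodD(2)[OF A] by simp
      qed
    qed
  qed
qed

lemma unit_val0:
  assumes z: "z \<in> R" "z \<noteq> 0" "v z = 0"
  shows "\<exists>w\<in>R. z * w = 1"
proof -
  obtain T0 where T0: "T0 \<ge> 0" "Dge v T0 \<subseteq> R" using D_in_R by blast
  define q where "q = inverse z"
  have "v q = 0" using vinv z unfolding q_def by simp
  hence "q \<in> val_ring v" unfolding val_ring_def by simp
  then obtain u where u: "u \<in> R" "q = u \<or> 0 < v (q - u)"
    using res_rat unfolding residually_rational_def by blast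
  show ?thesis
  proof (cases "q = u")
    case True thus ?thesis using u z unfolding q_def by (intro bexI[of _ u]) auto
  next
    case False
    define w where "w = 1 - u * z"
    have wR: "w \<in> R" unfolding w_def using Rdiff R1 Rmult u z by auto
    have wq: "w = z * (q - u)" unfolding w_def q_def using z by (simp add: algebra_simps)
    have qu: "q - u \<noteq> 0" using False by simp
    have w0: "w \<noteq> 0" using wq z qu by simp
    have vw: "0 < v w" using vmult[OF z(2) qu] wq u(2) False z by simp
    have w1: "1 - w \<noteq> 0" and vw1: "v (1 - w) = 0"
    proof -
      have "1 + (- w) \<noteq> 0" "v (1 + (- w)) = v 1"
        using ultra_strict[of 1 "-w"] vneg[OF w0] vw v1 w0 by auto
      thus "1 - w \<noteq> 0" "v (1 - w) = 0" using v1 by auto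
    qed
    define N where "N = nat T0"
    have geo: "inverse (1 - w) = (\<Sum>i<N. w^i) + w^N * inverse (1 - w)"
    proof -
      have "1 - w^N = (1 - w) * (\<Sum>i<N. w^i)" by (rule one_diff_power_eq)
      hence "(\<Sum>i<N. w^i) = (1 - w^N) * inverse (1 - w)" using w1 by (simp add: field_simps)
      thus ?thesis by (simp add: algebra_simps)
    qed
    have "w^N * inverse (1 - w) \<in> Dge v T0"
    proof -
      have "v (w^N * inverse (1 - w)) = int N * v w"
        using vmult[of "w^N" "inverse (1-w)"] vpow[OF w0] vinv[OF w1] vw1 w0 w1 by simp
      moreover have "int N * v w \<ge> T0" unfolding N_def using vw T0(1)
        by (metis int_nat_eq mult.comm_neutral mult_left_mono zero_less_imp_eq_int nat_0_le zero_le_imp_eq_int mult.commute linorder_not_le order_less_imp_le int_one_le_iff_zero_less)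
      ultimately show ?thesis unfolding Dge_def by simp
    qed
    hence "inverse (1 - w) \<in> R" using geo T0 Radd Rsum Rpow wR by (metis subsetD)
    moreover have "z * (u * inverse (1 - w)) = 1"
      using w1 unfolding w_def by (simp add: field_simps)
    ultimately show ?thesis using u Rmult by blast
  qed
qed

end



lemma valset_iff: "n \<in> valset v X \<longleftrightarrow> (\<exists>a\<in>X. a \<noteq> 0 \<and> v a = n)"
  unfolding valset_def by auto

lemma valset_mono: "X \<subseteq> Y \<Longrightarrow> valset v X \<subseteq> valset v Y"
  unfolding valset_def by auto

context vr begin

lemma submod_Int: "submod R A \<Longrightarrow> submod R B \<Longrightarrow> submod R (A \<inter> B)"
  unfolding submod_def by auto

lemma submod_sum: "submod R A \<Longrightarrow> submod R B \<Longrightarrow> submod R (sum_set A B)"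
  unfolding submod_def sum_set_def
proof (intro conjI ballI)
  assume A: "0 \<in> A \<and> (\<forall>a\<in>A. \<forall>b\<in>A. a + b \<in> A) \<and> (\<forall>r\<in>R. \<forall>a\<in>A. r * a \<in> A)"
     and B: "0 \<in> B \<and> (\<forall>a\<in>B. \<forall>b\<in>B. a + b \<in> B) \<and> (\<forall>r\<in>R. \<forall>a\<in>B. r * a \<in> B)"
  show "0 \<in> {a + b |a b. a \<in> A \<and> b \<in> B}" using A B by force
  fix x y assume "x \<in> {a + b |a b. a \<in> A \<and> b \<in> B}" "y \<in> {a + b |a b. a \<in> A \<and> b \<in> B}"
  then obtain a1 b1 a2 b2 where "x = a1 + b1" "y = a2 + b2" "a1 \<in> A" "a2 \<in> A" "b1 \<in> B" "b2 \<in> B" by blast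
  hence "x + y = (a1 + a2) + (b1 + b2)" "a1 + a2 \<in> A" "b1 + b2 \<in> B" using A B by (auto simp: ac_simps)
  thus "x + y \<in> {a + b |a b. a \<in> A \<and> b \<in> B}" by blast
next
  fix r x
  assume A: "0 \<in> A \<and> (\<forall>a\<in>A. \<forall>b\<in>A. a + b \<in> A) \<and> (\<forall>r\<in>R. \<forall>a\<in>A. r * a \<in> A)"
     and B: "0 \<in> B \<and> (\<forall>a\<in>B. \<forall>b\<in>B. a + b \<in> B) \<and> (\<forall>r\<in>R. \<forall>a\<in>B. r * a \<in> B)"
     and r: "r \<in> R" and x: "x \<in> {a + b |a b. a \<in> A \<and> b \<in> B}"
  then obtain a1 b1 where "x = a1 + b1" "a1 \<in> A" "b1 \<in> B" by blast
  hence "r * x = r * a1 + r * b1" "r * a1 \<in> A" "r * b1 \<in> B" using A B r by (auto simp: algebra_simps)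
  thus "r * x \<in> {a + b |a b. a \<in> A \<and> b \<in> B}" by blast
qed

lemma chain_mono:
  assumes "\<forall>i<n. L i \<subset> L (Suc i)"
  shows "i \<le> j \<Longrightarrow> j \<le> n \<Longrightarrow> L i \<subseteq> L j"
proof (induction j rule: nat.induct)
  case zero thus ?case by simp
next
  case (Suc j)
  show ?case
  proof (cases "i = Suc j")
    case True thus ?thesis by simp
  next
    case False
    hence "L i \<subseteq> L j" using Suc by simp
    moreover have "L j \<subset> L (Suc j)" using assms Suc.prems by simp
    ultimately show ?thesis by blast
  qed
qed

lemma chain_bound:
  assumes A: "submod R A" and B: "submod R B" and AB: "A \<subseteq> B" and DA: "Dge v T \<subseteq> A"
    and fin: "finite (valset v B - valset v A)"
    and L: "L 0 = A" "L n = B" "\<forall>i\<le>n. submod R (L i)" "\<forall>i<n. L i \<subset> L (Suc i)"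
  shows "n \<le> card (valset v B - valset v A)"
proof -
  have LB: "L i \<subseteq> B" if "i \<le> n" for i using chain_mono[OF L(4) that order_refl] L(2) by simp
  have AL: "A \<subseteq> L i" if "i \<le> n" for i using chain_mono[OF L(4) le0 that] L(1) by simp
  have "i \<le> card (valset v (L i) - valset v A)" if "i \<le> n" for i
    using that
  proof (induction i)
    case 0 thus ?case by simp
  next
    case (Suc i)
    have sub: "L i \<subset> L (Suc i)" using L(4) Suc.prems by simp
    have "\<not> valset v (L (Suc i)) \<subseteq> valset v (L i)"
    proof
      assume h: "valset v (L (Suc i)) \<subseteq> valset v (L i)"
      have "L (Suc i) \<subseteq> L i"
      proof (rule approx)
        show "submod R (L i)" "submod R (L (Suc i))" using L(3) Suc.prems by auto
        show "L i \<subseteq> L (Suc i)" using sub by auto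
        have "i \<le> n" using Suc.prems by simp
        thus "Dge v T \<subseteq> L i" using DA AL by blast
        show "\<forall>b\<in>L (Suc i). b \<noteq> 0 \<longrightarrow> v b \<in> valset v (L i)" using h valset_iff by blast
      qed
      thus False using sub by auto
    qed
    then obtain s where s: "s \<in> valset v (L (Suc i))" "s \<notin> valset v (L i)" by blast
    have "s \<notin> valset v A" using s valset_mono[OF AL[of i]] Suc.prems by auto
    hence ps: "valset v (L i) - valset v A \<subset> valset v (L (Suc i)) - valset v A"
      using s valset_mono[of "L i" "L (Suc i)"] sub by auto
    have "finite (valset v (L (Suc i)) - valset v A)"
      using fin valset_mono[OF LB[OF Suc.prems], of v] by (meson Diff_mono order_refl rev_finite_subset)
    hence "card (valset v (L i) - valset v A) < card (valset v (L (Suc i)) - valset v A)"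
      using ps psubset_card_mono by blast
    thus ?case using Suc by simp
  qed
  from this[of n] show ?thesis using L(2) by simp
qed

lemma chain_exists:
  assumes B: "submod R B"
  shows "submod R A \<Longrightarrow> A \<subseteq> B \<Longrightarrow> Dge v T \<subseteq> A \<Longrightarrow> finite (valset v B - valset v A)
    \<Longrightarrow> card (valset v B - valset v A) = N
    \<Longrightarrow> \<exists>L. L 0 = A \<and> L N = B \<and> (\<forall>i\<le>N. submod R (L i)) \<and> (\<forall>i<N. L i \<subset> L (Suc i))"
proof (induction N arbitrary: A)
  case 0
  hence "valset v B \<subseteq> valset v A" by auto
  hence "B \<subseteq> A" using approx[OF 0(1) B 0(2) 0(3)] valset_iff by blast
  hence "A = B" using 0 by auto
  thus ?case using 0 by (intro exI[of _ "\<lambda>_. A"]) auto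
next
  case (Suc N)
  define D where "D = valset v B - valset v A"
  have Dne: "D \<noteq> {}" using Suc.prems(5) unfolding D_def by (metis card.empty nat.distinct(1))
  have fD: "finite D" using Suc.prems unfolding D_def by auto
  define s where "s = Max D"
  have sD: "s \<in> D" using Dne fD unfolding s_def by simp
  have smax: "\<And>t. t \<in> D \<Longrightarrow> t \<le> s" using fD unfolding s_def by simp
  define A' where "A' = sum_set A (B \<inter> Dge v s)"
  have A'sub: "submod R A'" unfolding A'_def
    by (intro submod_sum submod_Int Suc.prems B submod_Dge)
  have AA': "A \<subseteq> A'"
  proof
    fix a assume "a \<in> A"
    moreover have "0 \<in> B \<inter> Dge v s" using submodD(1)[OF B] unfolding Dge_def by simp
    ultimately show "a \<in> A'" unfolding A'_def sum_set_def by force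
  qed
  have A'B: "A' \<subseteq> B" unfolding A'_def sum_set_def using Suc.prems(2) submodD(2)[OF B] by auto
  have vA': "valset v A' \<subseteq> valset v A \<union> {t \<in> valset v B. s \<le> t}"
  proof
    fix n assume "n \<in> valset v A'"
    then obtain z where z: "z \<in> A'" "z \<noteq> 0" "v z = n" using valset_iff by metis
    then obtain a d where ad: "z = a + d" "a \<in> A" "d \<in> B" "d \<in> Dge v s"
      unfolding A'_def sum_set_def by blast
    have nB: "n \<in> valset v B" using z A'B valset_iff by blast
    show "n \<in> valset v A \<union> {t \<in> valset v B. s \<le> t}"
    proof (cases "a = 0")
      case True thus ?thesis using ad z nB unfolding Dge_def by auto
    next
      case a0: False
      show ?thesis
      proof (cases "d = 0")
        case True thus ?thesis using ad z a0 valset_iff by force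
      next
        case d0: False
        hence vd: "s \<le> v d" using ad unfolding Dge_def by auto
        show ?thesis
        proof (cases "s \<le> v a")
          case True
          hence "s \<le> v z" using ultra[OF a0 d0] ad z vd by auto
          thus ?thesis using nB z by auto
        next
          case False
          hence "v z = v a" using ultra_strict[OF a0 d0] vd ad by auto
          thus ?thesis using ad z a0 valset_iff by force
        qed
      qed
    qed
  qed
  have sA': "s \<in> valset v A'"
  proof -
    obtain b where b: "b \<in> B" "b \<noteq> 0" "v b = s" using sD unfolding D_def using valset_iff by blast
    have "b \<in> A'" unfolding A'_def sum_set_def using b submodD(1)[OF Suc.prems(1)] unfolding Dge_def
      by force
    thus ?thesis using b valset_iff by blast
  qed
  have eqD: "valset v B - valset v A' = D - {s}"
  proof
    show "valset v B - valset v A' \<subseteq> D - {s}"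
      using valset_mono[OF AA'] sA' unfolding D_def by auto
  next
    show "D - {s} \<subseteq> valset v B - valset v A'"
    proof
      fix t assume t: "t \<in> D - {s}"
      hence "t < s" using smax by force
      thus "t \<in> valset v B - valset v A'" using t vA' unfolding D_def by auto
    qed
  qed
  have "card (valset v B - valset v A') = N" using eqD Suc.prems sD fD unfolding D_def by simp
  moreover have "finite (valset v B - valset v A')" using eqD fD by simp
  ultimately obtain L where L: "L 0 = A'" "L N = B" "\<forall>i\<le>N. submod R (L i)" "\<forall>i<N. L i \<subset> L (Suc i)"
    using Suc.IH[OF A'sub A'B] Suc.prems(3) AA' by blast
  have AneA': "A \<noteq> A'" using sA' sD unfolding D_def by auto
  define L' where "L' = (\<lambda>i. if i = 0 then A else L (i - 1))"
  have "L' 0 = A" "L' (Suc N) = B" unfolding L'_def using L by auto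
  moreover have "\<forall>i\<le>Suc N. submod R (L' i)" unfolding L'_def using L(3) Suc.prems(1) by auto
  moreover have "\<forall>i<Suc N. L' i \<subset> L' (Suc i)"
  proof (intro allI impI)
    fix i assume i: "i < Suc N"
    show "L' i \<subset> L' (Suc i)"
    proof (cases i)
      case 0 thus ?thesis unfolding L'_def using L(1) AA' AneA' by auto
    next
      case (Suc j) thus ?thesis unfolding L'_def using L(4) i by auto
    qed
  qed
  ultimately show ?case by blast
qed

lemma length_eq:
  assumes A: "submod R A" and B: "submod R B" and AB: "A \<subseteq> B" and DA: "Dge v T \<subseteq> A"
    and fin: "finite (valset v B - valset v A)"
  shows "mod_length R B A = card (valset v B - valset v A)"
  unfolding mod_length_def
proof (rule cSup_eq_maximum)
  show "card (valset v B - valset v A) \<in> {n. \<exists>L. L 0 = A \<and> L n = B \<and> (\<forall>i\<le>n. submod R (L i)) \<and> (\<forall>i<n. L i \<subset> L (Suc i))}"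
    using chain_exists[OF B A AB DA fin] by blast
next
  fix n assume "n \<in> {n. \<exists>L. L 0 = A \<and> L n = B \<and> (\<forall>i\<le>n. submod R (L i)) \<and> (\<forall>i<n. L i \<subset> L (Suc i))}"
  then obtain L where "L 0 = A" "L n = B" "\<forall>i\<le>n. submod R (L i)" "\<forall>i<n. L i \<subset> L (Suc i)" by blast
  thus "n \<le> card (valset v B - valset v A)" using chain_bound[OF A B AB DA fin] by blast
qed

end



context vr begin

definition S where "S = valset v R"
definition cnd where "cnd = (LEAST c. c \<in> S \<and> (\<forall>n::nat. c + int n \<in> S))"
definition ee where "ee = (LEAST e. e \<in> S \<and> 0 < e)"

lemma S_iff: "n \<in> S \<longleftrightarrow> (\<exists>a\<in>R. a \<noteq> 0 \<and> v a = n)"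
  unfolding S_def valset_iff ..

lemma S_nonneg: "s \<in> S \<Longrightarrow> 0 \<le> s"
  using Rnonneg S_iff by auto

lemma S0: "0 \<in> S" using S_iff R1 v1 by force

lemma S_add: "s \<in> S \<Longrightarrow> t \<in> S \<Longrightarrow> s + t \<in> S"
proof -
  assume "s \<in> S" "t \<in> S"
  then obtain a b where ab: "a \<in> R" "a \<noteq> 0" "v a = s" "b \<in> R" "b \<noteq> 0" "v b = t" using S_iff by auto
  hence "a * b \<in> R" "a * b \<noteq> 0" "v (a * b) = s + t" using Rmult vmult by auto
  thus ?thesis unfolding S_iff by blast
qed

lemma S_large: "\<exists>T0\<ge>0. \<forall>n. T0 \<le> n \<longrightarrow> n \<in> S"
proof -
  obtain T0 where T0: "T0 \<ge> 0" "Dge v T0 \<subseteq> R" using D_in_R by blast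
  have "n \<in> S" if "T0 \<le> n" for n
  proof -
    obtain a where "a \<noteq> 0" "v a = n" using exists_val by blast
    thus ?thesis using T0 that S_iff unfolding Dge_def by blast
  qed
  thus ?thesis using T0 by blast
qed

lemma cnd_props: "cnd \<in> S" "\<And>n::nat. cnd + int n \<in> S"
  "\<And>c'. c' \<in> S \<Longrightarrow> (\<forall>n::nat. c' + int n \<in> S) \<Longrightarrow> cnd \<le> c'"
proof -
  obtain T0 where T0: "T0 \<ge> 0" "\<forall>n. T0 \<le> n \<longrightarrow> n \<in> S" using S_large by blast
  have "T0 \<in> S \<and> (\<forall>n::nat. T0 + int n \<in> S)" using T0 by auto
  from int_least[of "\<lambda>c. c \<in> S \<and> (\<forall>n::nat. c + int n \<in> S)", OF this] S_nonneg
  show "cnd \<in> S" "\<And>n::nat. cnd + int n \<in> S"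
    "\<And>c'. c' \<in> S \<Longrightarrow> (\<forall>n::nat. c' + int n \<in> S) \<Longrightarrow> cnd \<le> c'"
    unfolding cnd_def by blast+
qed

lemma cnd_nonneg: "0 \<le> cnd" using cnd_props(1) S_nonneg by blast

lemma ge_cnd_S: "cnd \<le> n \<Longrightarrow> n \<in> S"
  using cnd_props(2)[of "nat (n - cnd)"] by simp

lemma DR: "Dge v cnd \<subseteq> R"
proof -
  obtain T0 where T0: "T0 \<ge> 0" "Dge v T0 \<subseteq> R" using D_in_R by blast
  have "Dge v cnd \<subseteq> R \<inter> Dge v cnd"
  proof (rule approx)
    show "submod R (R \<inter> Dge v cnd)" by (intro submod_Int submod_R submod_Dge)
    show "submod R (Dge v cnd)" by (rule submod_Dge)
    show "R \<inter> Dge v cnd \<subseteq> Dge v cnd" by auto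
    have "Dge v (max T0 cnd) \<subseteq> Dge v T0" "Dge v (max T0 cnd) \<subseteq> Dge v cnd"
      by (rule Dge_mono, simp)+
    thus "Dge v (max T0 cnd) \<subseteq> R \<inter> Dge v cnd" using T0 by blast
    show "\<forall>b\<in>Dge v cnd. b \<noteq> 0 \<longrightarrow> v b \<in> valset v (R \<inter> Dge v cnd)"
    proof (intro ballI impI)
      fix b assume "b \<in> Dge v cnd" "b \<noteq> 0"
      hence "cnd \<le> v b" unfolding Dge_def by auto
      hence "v b \<in> S" by (rule ge_cnd_S)
      then obtain a where "a \<in> R" "a \<noteq> 0" "v a = v b" using S_iff by blast
      hence "a \<in> R \<inter> Dge v cnd" using \<open>cnd \<le> v b\<close> unfolding Dge_def by simp
      thus "v b \<in> valset v (R \<inter> Dge v cnd)" unfolding valset_iff using \<open>a \<noteq> 0\<close> \<open>v a = v b\<close> by blast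
    qed
  qed
  thus ?thesis by auto
qed

lemma C_eq: "colon R (val_ring v) = Dge v cnd"
proof
  show "Dge v cnd \<subseteq> colon R (val_ring v)"
  proof
    fix z assume z: "z \<in> Dge v cnd"
    have "z * w \<in> R" if "w \<in> val_ring v" for w
    proof -
      have "z * w \<in> Dge v cnd"
        using z that vmult[of z w] unfolding Dge_def val_ring_def by (cases "z = 0 \<or> w = 0") auto
      thus ?thesis using DR by blast
    qed
    thus "z \<in> colon R (val_ring v)" unfolding colon_def by blast
  qed
next
  show "colon R (val_ring v) \<subseteq> Dge v cnd"
  proof
    fix z assume z: "z \<in> colon R (val_ring v)"
    show "z \<in> Dge v cnd"
    proof (cases "z = 0")
      case True thus ?thesis unfolding Dge_def by simp
    next
      case False
      have "1 \<in> val_ring v" unfolding val_ring_def using v1 by simp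
      hence zR: "z \<in> R" using z unfolding colon_def by force
      have "v z \<in> S" using zR False S_iff by blast
      moreover have "\<forall>n::nat. v z + int n \<in> S"
      proof
        fix n :: nat
        obtain a where a: "a \<noteq> 0" "v a = int n" using exists_val by blast
        hence "a \<in> val_ring v" unfolding val_ring_def by simp
        hence "z * a \<in> R" using z unfolding colon_def by blast
        moreover have "z * a \<noteq> 0" "v (z * a) = v z + int n" using a False vmult by auto
        ultimately show "v z + int n \<in> S" unfolding S_iff by blast
      qed
      ultimately have "cnd \<le> v z" using cnd_props(3) by blast
      thus ?thesis unfolding Dge_def by simp
    qed
  qed
qed

lemma ee_props: "ee \<in> S" "0 < ee" "\<And>s. s \<in> S \<Longrightarrow> 0 < s \<Longrightarrow> ee \<le> s"
proof -
  have "cnd + 1 \<in> S \<and> 0 < cnd + 1" using cnd_props(2)[of 1] cnd_nonneg by simp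
  from int_least[of "\<lambda>e. e \<in> S \<and> 0 < e", OF this]
  show "ee \<in> S" "0 < ee" "\<And>s. s \<in> S \<Longrightarrow> 0 < s \<Longrightarrow> ee \<le> s" unfolding ee_def by auto
qed

lemma m_props: "m \<subseteq> R" "submod R m" "m \<noteq> R" "\<And>a. a \<in> R \<Longrightarrow> a \<notin> m \<Longrightarrow> \<exists>b\<in>R. a * b = 1"
  using local unfolding local_ring_def ideal_of_def by auto

lemma m_char: "m = {z \<in> R. z = 0 \<or> 0 < v z}"
proof
  show "m \<subseteq> {z \<in> R. z = 0 \<or> 0 < v z}"
  proof
    fix z assume zm: "z \<in> m"
    hence zR: "z \<in> R" using m_props by auto
    have "0 < v z" if z0: "z \<noteq> 0"
    proof (rule ccontr)
      assume "\<not> 0 < v z"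
      hence "v z = 0" using Rnonneg[OF zR z0] by simp
      then obtain w where w: "w \<in> R" "z * w = 1" using unit_val0 zR z0 by blast
      have "w * z \<in> m" using submodD(3)[OF m_props(2) w(1) zm] .
      hence one: "1 \<in> m" using w by (simp add: mult.commute)
      have "R \<subseteq> m"
      proof
        fix r assume "r \<in> R"
        thus "r \<in> m" using submodD(3)[OF m_props(2) _ one] by simp
      qed
      thus False using m_props by auto
    qed
    thus "z \<in> {z \<in> R. z = 0 \<or> 0 < v z}" using zR by auto
  qed
next
  show "{z \<in> R. z = 0 \<or> 0 < v z} \<subseteq> m"
  proof
    fix z assume z: "z \<in> {z \<in> R. z = 0 \<or> 0 < v z}"
    show "z \<in> m"
    proof (rule ccontr)
      assume zm: "z \<notin> m"
      hence z0: "z \<noteq> 0" using submodD(1)[OF m_props(2)] by auto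
      obtain b where b: "b \<in> R" "z * b = 1" using m_props(4) z zm by blast
      have b0: "b \<noteq> 0" using b by auto
      have "v z + v b = 0" using vmult[OF z0 b0] b v1 by simp
      thus False using Rnonneg[OF b(1) b0] z z0 by auto
    qed
  qed
qed

lemma m_pos: "z \<in> m \<Longrightarrow> z \<noteq> 0 \<Longrightarrow> v z \<in> S \<and> ee \<le> v z"
proof -
  assume z: "z \<in> m" "z \<noteq> 0"
  hence "z \<in> R" "0 < v z" using m_char by blast+
  hence "v z \<in> S" using z S_iff by blast
  thus ?thesis using ee_props(3) \<open>0 < v z\<close> by blast
qed

lemma in_m: "z \<in> R \<Longrightarrow> z \<noteq> 0 \<Longrightarrow> 0 < v z \<Longrightarrow> z \<in> m"
proof -
  assume "z \<in> R" "z \<noteq> 0" "0 < v z"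
  hence "z \<in> {z \<in> R. z = 0 \<or> 0 < v z}" by blast
  thus ?thesis using m_char by blast
qed

lemma xprime: "\<exists>x'. x' \<in> m \<and> x' \<noteq> 0 \<and> v x' = ee"
proof -
  obtain a where "a \<in> R" "a \<noteq> 0" "v a = ee" using ee_props(1) S_iff by blast
  thus ?thesis using in_m[of a] ee_props(2) by auto
qed

lemma S_infinite: "infinite S"
proof
  assume "finite S"
  hence M: "\<forall>s\<in>S. s \<le> Max S" by simp
  have "max (Max S) cnd + 1 \<in> S" using ge_cnd_S by simp
  hence "max (Max S) cnd + 1 \<le> Max S" using M by blast
  thus False by simp
qed

end



context vr begin

definition V where "V = valset v (colon R m)"
definition W where "W = (\<lambda>n. ee + n) ` V"
definition Ap where "Ap = {s \<in> S. s - ee \<notin> S}"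

lemma colon_iff: "a \<in> colon A B \<longleftrightarrow> (\<forall>b\<in>B. a * b \<in> A)"
  unfolding colon_def by simp

lemma submod_colon: "submod R (colon R m)"
proof -
  have "0 \<in> colon R m" unfolding colon_iff using R0 by simp
  moreover have "a1 + a2 \<in> colon R m" if "a1 \<in> colon R m" "a2 \<in> colon R m" for a1 a2
    using that Radd unfolding colon_iff by (simp add: distrib_right)
  moreover have "r * a \<in> colon R m" if "r \<in> R" "a \<in> colon R m" for r a
    using that Rmult unfolding colon_iff by (simp add: mult.assoc)
  ultimately show ?thesis unfolding submod_def by blast
qed

lemma R_sub_colon: "R \<subseteq> colon R m"
  unfolding colon_def using m_props(1) Rmult by blast

lemma V_iff: "n \<in> V \<longleftrightarrow> (\<exists>a\<in>colon R m. a \<noteq> 0 \<and> v a = n)"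
  unfolding V_def valset_iff ..

lemma V_shift: "n \<in> V \<Longrightarrow> ee + n \<in> S"
proof -
  assume "n \<in> V"
  then obtain a where a: "a \<in> colon R m" "a \<noteq> 0" "v a = n" using V_iff by blast
  obtain x' where x': "x' \<in> m" "x' \<noteq> 0" "v x' = ee" using xprime by blast
  have "a * x' \<in> R" using a x' colon_iff by blast
  moreover have "a * x' \<noteq> 0" "v (a * x') = ee + n" using a x' vmult by auto
  ultimately show ?thesis unfolding S_iff by blast
qed

lemma V_lower: "n \<in> V \<Longrightarrow> - ee \<le> n"
proof -
  assume "n \<in> V"
  hence "0 \<le> ee + n" using V_shift S_nonneg by blast
  thus ?thesis by simp
qed

lemma V_upper: "cnd - ee \<le> n \<Longrightarrow> n \<in> V"
proof -
  assume n: "cnd - ee \<le> n"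
  obtain a where a: "a \<noteq> 0" "v a = n" using exists_val by blast
  have "a * b \<in> R" if "b \<in> m" for b
  proof (cases "b = 0")
    case True thus ?thesis using R0 by simp
  next
    case False
    hence "ee \<le> v b" using m_pos[OF that False] by blast
    hence "a * b \<in> Dge v cnd" unfolding Dge_def using vmult[OF a(1) False] a n by simp
    thus ?thesis using DR by blast
  qed
  hence "a \<in> colon R m" unfolding colon_iff by blast
  thus ?thesis unfolding V_iff using a by blast
qed

lemma S_sub_V: "S \<subseteq> V"
proof -
  have "valset v R \<subseteq> valset v (colon R m)" using R_sub_colon by (rule valset_mono)
  thus ?thesis unfolding S_def V_def .
qed

lemma fin_VS: "finite (V - S)"
proof (rule finite_subset)
  show "V - S \<subseteq> {-ee..<cnd}"
  proof
    fix n assume "n \<in> V - S"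
    hence "- ee \<le> n" "\<not> cnd \<le> n" using V_lower ge_cnd_S by blast+
    thus "n \<in> {-ee..<cnd}" by simp
  qed
qed simp

lemma r_eq: "mod_length R (colon R m) R = card (V - S)"
  unfolding V_def S_def
  using length_eq[OF submod_R submod_colon R_sub_colon DR] fin_VS unfolding V_def S_def by simp

lemma S_plus_mult: "s \<in> S \<Longrightarrow> s + int k * ee \<in> S"
proof (induction k)
  case 0 thus ?case by simp
next
  case (Suc k)
  hence "(s + int k * ee) + ee \<in> S" using S_add ee_props(1) by blast
  thus ?case by (simp add: algebra_simps)
qed

lemma Ap_card: "finite Ap" "card Ap = nat ee"
proof -
  have inj: "inj_on (\<lambda>s. s mod ee) Ap"
  proof (rule inj_onI)
    fix s1 s2 assume s1: "s1 \<in> Ap" and s2: "s2 \<in> Ap" and eq: "s1 mod ee = s2 mod ee"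
    have *: False if a: "a \<in> Ap" "b \<in> Ap" "a mod ee = b mod ee" "a < b" for a b
    proof -
      have "ee dvd (b - a)" by (metis a(3) mod_eq_dvd_iff dvd_minus_iff minus_diff_eq)
      then obtain q where q: "b - a = ee * q" by blast
      have "q \<ge> 1" using q a(4) ee_props(2) by (smt (verit) mult_le_0_iff)
      have "b - ee = a + int (nat (q - 1)) * ee" using q \<open>q \<ge> 1\<close> by (simp add: algebra_simps)
      moreover have "a + int (nat (q - 1)) * ee \<in> S" using S_plus_mult a(1) unfolding Ap_def by blast
      ultimately show False using a(2) unfolding Ap_def by simp
    qed
    show "s1 = s2" using *[OF s1 s2 eq] *[OF s2 s1 eq[symmetric]] by (metis not_less_iff_gr_or_eq)
  qed
  have img: "(\<lambda>s. s mod ee) ` Ap = {0..<ee}"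
  proof
    show "(\<lambda>s. s mod ee) ` Ap \<subseteq> {0..<ee}" using ee_props(2) by auto
  next
    show "{0..<ee} \<subseteq> (\<lambda>s. s mod ee) ` Ap"
    proof
      fix j assume j: "j \<in> {0..<ee}"
      define w where "w = cnd + (j - cnd) mod ee"
      have "w \<in> S" unfolding w_def using ge_cnd_S ee_props(2) by simp
      moreover have "w mod ee = j" unfolding w_def using j by (simp add: mod_add_right_eq)
      ultimately have "w \<in> S \<and> w mod ee = j" by simp
      from int_least[of "\<lambda>s. s \<in> S \<and> s mod ee = j", OF this] S_nonneg
      obtain s0 where s0: "s0 \<in> S" "s0 mod ee = j" "\<And>s. s \<in> S \<Longrightarrow> s mod ee = j \<Longrightarrow> s0 \<le> s"
        by blast
      have "s0 - ee \<notin> S"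
      proof
        assume "s0 - ee \<in> S"
        moreover have "(s0 - ee) mod ee = j" using s0(2) by (simp add: mod_diff_right_eq[symmetric])
        ultimately have "s0 \<le> s0 - ee" using s0(3) by blast
        thus False using ee_props(2) by simp
      qed
      thus "j \<in> (\<lambda>s. s mod ee) ` Ap" using s0 unfolding Ap_def by force
    qed
  qed
  show "finite Ap" using finite_imageD[of "\<lambda>s. s mod ee" Ap] inj img by simp
  show "card Ap = nat ee" using card_image[OF inj] img by simp
qed

lemma W_sub: "W \<subseteq> S" unfolding W_def using V_shift by blast

lemma Ap_split: "int (card (S - W)) = ee - int (card (V - S))"
proof -
  have "Ap = (S - W) \<union> ((\<lambda>n. ee + n) ` (V - S))"
  proof
    show "Ap \<subseteq> (S - W) \<union> ((\<lambda>n. ee + n) ` (V - S))"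
    proof
      fix s assume s: "s \<in> Ap"
      show "s \<in> (S - W) \<union> ((\<lambda>n. ee + n) ` (V - S))"
      proof (cases "s \<in> W")
        case True
        then obtain n where "n \<in> V" "s = ee + n" unfolding W_def by blast
        moreover have "n \<notin> S" using s calculation unfolding Ap_def by auto
        ultimately show ?thesis by blast
      next
        case False thus ?thesis using s unfolding Ap_def by blast
      qed
    qed
  next
    show "(S - W) \<union> ((\<lambda>n. ee + n) ` (V - S)) \<subseteq> Ap"
    proof
      fix s assume "s \<in> (S - W) \<union> ((\<lambda>n. ee + n) ` (V - S))"
      then consider "s \<in> S - W" | n where "n \<in> V - S" "s = ee + n" by blast
      thus "s \<in> Ap"
      proof cases
        case 1
        hence "s - ee \<notin> V" unfolding W_def by force
        thus ?thesis using 1 S_sub_V unfolding Ap_def by blast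
      next
        case 2 thus ?thesis using V_shift unfolding Ap_def by auto
      qed
    qed
  qed
  moreover have "(S - W) \<inter> ((\<lambda>n. ee + n) ` (V - S)) = {}" unfolding W_def by blast
  moreover have "finite (S - W)" using Ap_card(1) calculation(1) by (metis finite_Un)
  moreover have "finite ((\<lambda>n. ee + n) ` (V - S))" using fin_VS by simp
  ultimately have "card Ap = card (S - W) + card ((\<lambda>n. ee + n) ` (V - S))"
    using card_Un_disjoint by metis
  moreover have "card ((\<lambda>n. ee + n) ` (V - S)) = card (V - S)" by (rule card_image) (simp add: inj_on_def)
  ultimately show ?thesis using Ap_card(2) ee_props(2) by simp
qed

lemma fin_SW: "finite (S - W)"
proof -
  have "S - W \<subseteq> Ap" unfolding Ap_def W_def using S_sub_V by force
  thus ?thesis using Ap_card(1) finite_subset by blast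
qed

lemma SW_sub: "S - W \<subseteq> {s \<in> S. s < cnd \<and> s - ee \<notin> S}"
proof
  fix s assume s: "s \<in> S - W"
  have nV: "s - ee \<notin> V" using s unfolding W_def by force
  hence "s - ee \<notin> S" using S_sub_V by blast
  moreover have "s < cnd"
  proof (rule ccontr)
    assume "\<not> s < cnd"
    hence "cnd - ee \<le> s - ee" by simp
    hence "s - ee \<in> V" by (rule V_upper)
    with nV show False by simp
  qed
  ultimately show "s \<in> {s \<in> S. s < cnd \<and> s - ee \<notin> S}" using s by blast
qed

lemma key:
  assumes x: "x \<in> m" "x \<noteq> 0" "v x = ee"
    and y: "y \<in> S" "ee \<le> y"
    and big: "\<forall>s\<in>S. 0 < s \<and> s < cnd \<and> s - ee \<notin> S \<longrightarrow> cnd + ee \<le> y + s"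
  shows "y \<in> W"
proof -
  obtain b where b: "b \<in> R" "b \<noteq> 0" "v b = y" using y S_iff by blast
  define a where "a = b / x"
  have a0: "a \<noteq> 0" and va: "v a = y - ee" unfolding a_def using b x vdiv by auto
  have xR: "x \<in> R" using x m_props by blast
  define N where "N = {z \<in> m. a * z \<in> R}"
  have aR: "a * z \<in> R" if "z \<noteq> 0" "cnd + ee \<le> y + v z" for z
  proof -
    have "v (a * z) \<ge> cnd" using vmult[OF a0 that(1)] va that by simp
    hence "a * z \<in> Dge v cnd" unfolding Dge_def by simp
    thus ?thesis using DR by blast
  qed
  have "m \<subseteq> N"
  proof (rule approx)
    show "submod R N" unfolding submod_def N_def
    proof (intro conjI ballI)
      show "0 \<in> {z \<in> m. a * z \<in> R}" using submodD(1)[OF m_props(2)] R0 by simp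
    next
      fix z1 z2 assume "z1 \<in> {z \<in> m. a * z \<in> R}" "z2 \<in> {z \<in> m. a * z \<in> R}"
      thus "z1 + z2 \<in> {z \<in> m. a * z \<in> R}" using submodD(2)[OF m_props(2)] Radd
        by (simp add: distrib_left)
    next
      fix r z assume rz: "r \<in> R" "z \<in> {z \<in> m. a * z \<in> R}"
      have eq: "a * (r * z) = r * (a * z)" by (simp add: ac_simps)
      have "r * (a * z) \<in> R" using rz Rmult by blast
      hence "a * (r * z) \<in> R" unfolding eq .
      moreover have "r * z \<in> m" using rz submodD(3)[OF m_props(2)] by simp
      ultimately show "r * z \<in> {z \<in> m. a * z \<in> R}" by simp
    qed
    show "submod R m" by (rule m_props(2))
    show "N \<subseteq> m" unfolding N_def by blast
    show "Dge v (cnd + ee) \<subseteq> N"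
    proof
      fix z assume z: "z \<in> Dge v (cnd + ee)"
      show "z \<in> N"
      proof (cases "z = 0")
        case True thus ?thesis unfolding N_def using submodD(1)[OF m_props(2)] R0 by simp
      next
        case False
        hence vz: "cnd + ee \<le> v z" using z unfolding Dge_def by simp
        hence "z \<in> Dge v cnd" unfolding Dge_def using ee_props(2) by simp
        hence "z \<in> R" using DR by blast
        hence "z \<in> m" using in_m False vz cnd_nonneg ee_props(2) by simp
        moreover have "cnd + ee \<le> y + v z" using vz y ee_props(2) by linarith
        hence "a * z \<in> R" using aR[OF False] by blast
        ultimately show ?thesis unfolding N_def by blast
      qed
    qed
    show "\<forall>z\<in>m. z \<noteq> 0 \<longrightarrow> v z \<in> valset v N"
    proof (intro ballI impI)
      fix z assume zm: "z \<in> m" and z0: "z \<noteq> 0"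
      have zS: "v z \<in> S" and ez: "ee \<le> v z" using m_pos[OF zm z0] by auto
      show "v z \<in> valset v N"
      proof (cases "v z < cnd \<and> v z - ee \<in> S")
        case True
        then obtain r where r: "r \<in> R" "r \<noteq> 0" "v r = v z - ee" using S_iff by blast
        have "x * r \<in> R" "x * r \<noteq> 0" "v (x * r) = v z" using Rmult xR r x vmult by auto
        hence "x * r \<in> m" using in_m ee_props(2) ez by simp
        moreover have eq: "a * (x * r) = b * r" unfolding a_def using x by simp
        have "b * r \<in> R" using Rmult b r by blast
        hence "a * (x * r) \<in> R" unfolding eq .
        ultimately have "x * r \<in> N" unfolding N_def by blast
        thus ?thesis unfolding valset_iff using \<open>x * r \<noteq> 0\<close> \<open>v (x * r) = v z\<close> by blast
      next
        case False
        have "cnd + ee \<le> y + v z"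
        proof (cases "v z < cnd")
          case True
          hence "v z - ee \<notin> S" using False by simp
          thus ?thesis using big zS True ez ee_props(2) by simp
        next
          case False thus ?thesis using y by simp
        qed
        hence "z \<in> N" using aR z0 zm unfolding N_def by blast
        thus ?thesis unfolding valset_iff using z0 by blast
      qed
    qed
  qed
  hence "a \<in> colon R m" unfolding N_def colon_iff by blast
  hence "y - ee \<in> V" unfolding V_iff using a0 va by blast
  thus ?thesis unfolding W_def by force
qed

end



lemma floor_uniq:
  fixes a e :: int assumes e: "0 < e"
  shows "\<exists>!q. a - e \<le> q * e \<and> q * e < a"
proof
  define q where "q = (a - 1) div e"
  have dm: "q * e + (a - 1) mod e = a - 1" unfolding q_def by (rule div_mult_mod_eq)
  have "0 \<le> (a - 1) mod e" "(a - 1) mod e < e" using e by auto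
  thus "a - e \<le> q * e \<and> q * e < a" using dm by linarith
next
  fix q assume q: "a - e \<le> q * e \<and> q * e < a"
  define q0 where "q0 = (a - 1) div e"
  have dm: "q0 * e + (a - 1) mod e = a - 1" unfolding q0_def by (rule div_mult_mod_eq)
  have "0 \<le> (a - 1) mod e" "(a - 1) mod e < e" using e by auto
  hence q0: "a - e \<le> q0 * e \<and> q0 * e < a" using dm by linarith
  show "q = (a - 1) div e"
  proof (rule ccontr)
    assume "q \<noteq> (a - 1) div e"
    hence "q + 1 \<le> q0 \<or> q0 + 1 \<le> q" unfolding q0_def by linarith
    thus False
    proof
      assume "q + 1 \<le> q0"
      hence "(q + 1) * e \<le> q0 * e" using e by (intro mult_right_mono) auto
      thus False using q q0 by (simp add: algebra_simps)
    next
      assume "q0 + 1 \<le> q"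
      hence "(q0 + 1) * e \<le> q * e" using e by (intro mult_right_mono) auto
      thus False using q q0 by (simp add: algebra_simps)
    qed
  qed
qed

lemma the_p:
  fixes c e :: int assumes e: "0 < e"
  shows "c - e \<le> (THE p. c - e \<le> p * e \<and> p * e < c) * e \<and> (THE p. c - e \<le> p * e \<and> p * e < c) * e < c"
  using theI'[OF floor_uniq[OF e, of c]] .

lemma the_l:
  fixes c e y :: int assumes e: "0 < e" and y: "y < c"
  shows "0 \<le> (THE l. 0 \<le> l \<and> y + l * e < c \<and> c \<le> y + (l + 1) * e)
    \<and> y + (THE l. 0 \<le> l \<and> y + l * e < c \<and> c \<le> y + (l + 1) * e) * e < c
    \<and> c \<le> y + ((THE l. 0 \<le> l \<and> y + l * e < c \<and> c \<le> y + (l + 1) * e) + 1) * e"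
proof -
  have eqv: "(0 \<le> l \<and> y + l * e < c \<and> c \<le> y + (l + 1) * e) \<longleftrightarrow> ((c - y) - e \<le> l * e \<and> l * e < c - y)" for l
  proof
    assume "(c - y) - e \<le> l * e \<and> l * e < c - y"
    moreover have "0 \<le> l"
    proof (rule ccontr)
      assume "\<not> 0 \<le> l"
      hence "(l + 1) * e \<le> 0 * e" using e by (intro mult_right_mono) auto
      thus False using calculation y by (simp add: algebra_simps)
    qed
    ultimately show "0 \<le> l \<and> y + l * e < c \<and> c \<le> y + (l + 1) * e" by (simp add: algebra_simps)
  qed (simp add: algebra_simps)
  have "\<exists>!l. 0 \<le> l \<and> y + l * e < c \<and> c \<le> y + (l + 1) * e"
    using floor_uniq[OF e, of "c - y"] unfolding eqv .
  from theI'[OF this] show ?thesis by blast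
qed

lemma arith_gen:
  fixes e c p L :: int
  assumes "0 < e" "c - e \<le> p * e" "p * e < c" "c < (L + 3) * e"
  shows "p \<le> L + 2 \<and> (p = L + 2 \<longrightarrow> 0 < (p + 1) * e - c)"
proof -
  have "p \<le> L + 2"
  proof (rule ccontr)
    assume "\<not> p \<le> L + 2"
    hence "(L + 3) * e \<le> p * e" using assms(1) by (intro mult_right_mono) auto
    thus False using assms by linarith
  qed
  thus ?thesis using assms by (simp add: algebra_simps)
qed

lemma arith2:
  fixes e c p l y :: int
  assumes "0 < e" "c - e \<le> p * e" "p * e < c" "c \<le> y + (l + 1) * e" "2 * y < c + e"
  shows "p \<le> 2 * l + 2 \<and> (p = 2 * l + 2 \<longrightarrow> 0 < (p + 1) * e - c)"
proof -
  have "c < (2 * l + 3) * e" using assms(4,5) by (simp add: algebra_simps)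
  from arith_gen[OF assms(1-3), of "2 * l"] this show ?thesis by simp
qed

lemma arith3:
  fixes e c p l1 l2 y1 y2 :: int
  assumes "0 < e" "c - e \<le> p * e" "p * e < c" "c \<le> y1 + (l1 + 1) * e" "c \<le> y2 + (l2 + 1) * e"
    "y1 + y2 < c + e"
  shows "p \<le> l1 + l2 + 2 \<and> (p = l1 + l2 + 2 \<longrightarrow> 0 < (p + 1) * e - c)"
proof -
  have "c < (l1 + l2 + 3) * e" using assms(4-6) by (simp add: algebra_simps)
  from arith_gen[OF assms(1-3), of "l1 + l2"] this show ?thesis by simp
qed

lemma arith4:
  fixes e c p y :: int
  assumes "0 < e" "3 \<le> p" "p * e < c" "y < c" "c \<le> y + e"
  shows "c + e < 2 * y"
proof -
  have "3 * e \<le> p * e" using assms by (intro mult_right_mono) auto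
  thus ?thesis using assms by linarith
qed

lemma arith2z:
  fixes e c p l :: int
  assumes "0 < e" "p * e < c" "0 \<le> l" "c \<le> e + (l + 1) * e"
  shows "p \<le> 2 * l + 2 \<and> p \<noteq> 2 * l + 2"
proof -
  have "p \<le> l + 1"
  proof (rule ccontr)
    assume "\<not> p \<le> l + 1"
    hence "(l + 2) * e \<le> p * e" using assms(1) by (intro mult_right_mono) auto
    thus False using assms by (simp add: algebra_simps)
  qed
  thus ?thesis using assms by simp
qed

lemma ylist:
  fixes Y :: "int set"
  assumes fin: "finite Y" and card: "card Y = k - 1"
  shows "\<forall>i\<in>{1..k-1}. sorted_list_of_set Y ! (i - 1) \<in> Y"
    "(\<lambda>i. sorted_list_of_set Y ! (i - 1)) ` {1..k-1} = Y"
    "1 < k \<Longrightarrow> \<forall>s\<in>Y. sorted_list_of_set Y ! (1 - 1) \<le> s"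
proof -
  let ?L = "sorted_list_of_set Y"
  have len: "length ?L = k - 1" using card fin by simp
  have set: "set ?L = Y" using fin by simp
  have srt: "sorted ?L" by simp
  show 1: "\<forall>i\<in>{1..k-1}. ?L ! (i - 1) \<in> Y"
  proof
    fix i assume "i \<in> {1..k-1}"
    hence "i - 1 < length ?L" using len by auto
    thus "?L ! (i - 1) \<in> Y" using set nth_mem by blast
  qed
  show "(\<lambda>i. ?L ! (i - 1)) ` {1..k-1} = Y"
  proof
    show "(\<lambda>i. ?L ! (i - 1)) ` {1..k-1} \<subseteq> Y" using 1 by blast
  next
    show "Y \<subseteq> (\<lambda>i. ?L ! (i - 1)) ` {1..k-1}"
    proof
      fix s assume "s \<in> Y"
      then obtain j where j: "j < length ?L" "?L ! j = s" using set by (metis in_set_conv_nth)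
      hence "Suc j \<in> {1..k-1}" using len by auto
      moreover have "?L ! (Suc j - 1) = s" using j by simp
      ultimately show "s \<in> (\<lambda>i. ?L ! (i - 1)) ` {1..k-1}" by force
    qed
  qed
  show "1 < k \<Longrightarrow> \<forall>s\<in>Y. ?L ! (1 - 1) \<le> s"
  proof
    fix s assume "s \<in> Y"
    then obtain j where j: "j < length ?L" "?L ! j = s" using set by (metis in_set_conv_nth)
    thus "?L ! (1 - 1) \<le> s" using sorted_nth_mono[OF srt, of 0 j] by simp
  qed
qed




context vr begin

lemma submod_smul: "submod R (smul_set x R)"
proof -
  have "0 \<in> smul_set x R" unfolding smul_set_def using R0 by force
  moreover have "a + b \<in> smul_set x R" if ab: "a \<in> smul_set x R" "b \<in> smul_set x R" for a b
  proof -
    obtain r1 r2 where "a = x * r1" "b = x * r2" "r1 \<in> R" "r2 \<in> R" using ab unfolding smul_set_def by blast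
    hence "a + b = x * (r1 + r2)" "r1 + r2 \<in> R" using Radd by (auto simp: algebra_simps)
    thus ?thesis unfolding smul_set_def by blast
  qed
  moreover have "r * a \<in> smul_set x R" if ra: "r \<in> R" "a \<in> smul_set x R" for r a
  proof -
    obtain r1 where "a = x * r1" "r1 \<in> R" using ra unfolding smul_set_def by blast
    hence "r * a = x * (r * r1)" "r * r1 \<in> R" using Rmult ra by (auto simp: algebra_simps)
    thus ?thesis unfolding smul_set_def by blast
  qed
  ultimately show ?thesis unfolding submod_def by blast
qed

lemma kx_set:
  assumes x: "x \<in> m" "x \<noteq> 0" "v x = ee"
  shows "S - valset v (sum_set (Dge v cnd) (smul_set x R)) = {s \<in> S. s < cnd \<and> s - ee \<notin> S}"
proof
  let ?A = "sum_set (Dge v cnd) (smul_set x R)"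
  have xR: "x \<in> R" using x m_props by blast
  show "S - valset v ?A \<subseteq> {s \<in> S. s < cnd \<and> s - ee \<notin> S}"
  proof
    fix s assume s: "s \<in> S - valset v ?A"
    have "s < cnd"
    proof (rule ccontr)
      assume "\<not> s < cnd"
      obtain a where a: "a \<noteq> 0" "v a = s" using exists_val by blast
      have "a \<in> Dge v cnd" using a \<open>\<not> s < cnd\<close> unfolding Dge_def by simp
      moreover have "0 \<in> smul_set x R" unfolding smul_set_def using R0 by force
      ultimately have "a + 0 \<in> ?A" unfolding sum_set_def by blast
      hence "s \<in> valset v ?A" unfolding valset_iff using a by (intro bexI[of _ "a + 0"]) simp_all
      thus False using s by blast
    qed
    moreover have "s - ee \<notin> S"
    proof
      assume "s - ee \<in> S"
      then obtain r where r: "r \<in> R" "r \<noteq> 0" "v r = s - ee" using S_iff by blast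
      have "x * r \<in> smul_set x R" unfolding smul_set_def using r by blast
      moreover have "0 \<in> Dge v cnd" unfolding Dge_def by simp
      ultimately have "0 + x * r \<in> ?A" unfolding sum_set_def by blast
      moreover have "x * r \<noteq> 0" "v (x * r) = s" using x r vmult by auto
      ultimately have "s \<in> valset v ?A" unfolding valset_iff by (intro bexI[of _ "0 + x * r"]) simp_all
      thus False using s by blast
    qed
    ultimately show "s \<in> {s \<in> S. s < cnd \<and> s - ee \<notin> S}" using s by blast
  qed
next
  let ?A = "sum_set (Dge v cnd) (smul_set x R)"
  show "{s \<in> S. s < cnd \<and> s - ee \<notin> S} \<subseteq> S - valset v ?A"
  proof
    fix s assume s: "s \<in> {s \<in> S. s < cnd \<and> s - ee \<notin> S}"
    have "s \<notin> valset v ?A"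
    proof
      assume "s \<in> valset v ?A"
      then obtain z where z: "z \<in> ?A" "z \<noteq> 0" "v z = s" unfolding valset_iff by blast
      then obtain d r where dr: "z = d + x * r" "d \<in> Dge v cnd" "r \<in> R"
        unfolding sum_set_def smul_set_def by blast
      show False
      proof (cases "r = 0")
        case True
        hence "z = d" using dr by simp
        thus False using z dr s unfolding Dge_def by auto
      next
        case r0: False
        have xr0: "x * r \<noteq> 0" and vxr: "v (x * r) = ee + v r" using x r0 vmult by auto
        have vrS: "v r \<in> S" using S_iff dr r0 by blast
        show False
        proof (cases "d = 0")
          case True
          hence "v z = ee + v r" using dr vxr by simp
          thus False using vrS z s by simp
        next
          case d0: False
          have vd: "cnd \<le> v d" using dr d0 unfolding Dge_def by simp
          show False
          proof (cases "cnd \<le> v (x * r)")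
            case True
            have "min (v d) (v (x * r)) \<le> v z" using ultra[OF d0 xr0] z dr by simp
            thus False using True vd z s by (auto simp: min_le_iff_disj)
          next
            case False
            hence "v (x * r + d) = v (x * r)" using ultra_strict[OF xr0 d0] vd by simp
            hence "v z = ee + v r" using dr vxr by (simp add: add.commute)
            thus False using vrS z s by simp
          qed
        qed
      qed
    qed
    thus "s \<in> S - valset v ?A" using s by blast
  qed
qed

lemma sumA_props:
  assumes xR: "x \<in> R"
  shows "submod R (sum_set (Dge v cnd) (smul_set x R))"
    "sum_set (Dge v cnd) (smul_set x R) \<subseteq> R"
    "Dge v cnd \<subseteq> sum_set (Dge v cnd) (smul_set x R)"
proof -
  show "submod R (sum_set (Dge v cnd) (smul_set x R))" by (intro submod_sum submod_Dge submod_smul)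
  show "sum_set (Dge v cnd) (smul_set x R) \<subseteq> R"
  proof
    fix z assume "z \<in> sum_set (Dge v cnd) (smul_set x R)"
    then obtain d r where "z = d + x * r" "d \<in> Dge v cnd" "r \<in> R" unfolding sum_set_def smul_set_def by blast
    thus "z \<in> R" using DR Radd Rmult xR by blast
  qed
  show "Dge v cnd \<subseteq> sum_set (Dge v cnd) (smul_set x R)"
  proof
    fix d assume "d \<in> Dge v cnd"
    moreover have "0 \<in> smul_set x R" unfolding smul_set_def using R0 by force
    ultimately have "d + 0 \<in> sum_set (Dge v cnd) (smul_set x R)" unfolding sum_set_def by blast
    thus "d \<in> sum_set (Dge v cnd) (smul_set x R)" by simp
  qed
qed

lemma k_len:
  assumes xR: "x \<in> R" and fin: "finite (S - valset v (sum_set (Dge v cnd) (smul_set x R)))"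
  shows "mod_length R R (sum_set (Dge v cnd) (smul_set x R)) = card (S - valset v (sum_set (Dge v cnd) (smul_set x R)))"
  using length_eq[OF sumA_props(1)[OF xR] submod_R sumA_props(2)[OF xR] sumA_props(3)[OF xR]] fin
  unfolding S_def by simp

lemma k0_set: "S - valset v (sum_set (Dge v cnd) (smul_set 0 R)) = {s \<in> S. s < cnd}"
proof -
  have "sum_set (Dge v cnd) (smul_set 0 R) = Dge v cnd"
    unfolding sum_set_def smul_set_def using R0 by force
  moreover have "valset v (Dge v cnd) = {n. cnd \<le> n}"
  proof
    show "valset v (Dge v cnd) \<subseteq> {n. cnd \<le> n}" unfolding valset_def Dge_def by auto
  next
    show "{n. cnd \<le> n} \<subseteq> valset v (Dge v cnd)"
    proof
      fix n assume "n \<in> {n. cnd \<le> n}"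
      moreover obtain a where "a \<noteq> 0" "v a = n" using exists_val by blast
      ultimately show "n \<in> valset v (Dge v cnd)" unfolding valset_iff Dge_def by force
    qed
  qed
  ultimately show ?thesis by auto
qed

lemma xRm_val:
  assumes x: "x \<in> m" "x \<noteq> 0" "v x = ee"
  shows "valset v (colon (smul_set x R) m) = W"
proof
  show "valset v (colon (smul_set x R) m) \<subseteq> W"
  proof
    fix n assume "n \<in> valset v (colon (smul_set x R) m)"
    then obtain a where a: "a \<in> colon (smul_set x R) m" "a \<noteq> 0" "v a = n" unfolding valset_iff by blast
    have "a / x \<in> colon R m" unfolding colon_iff
    proof
      fix b assume "b \<in> m"
      then obtain r where "a * b = x * r" "r \<in> R" using a(1) unfolding colon_iff smul_set_def by blast
      hence "a / x * b = r" using x by (simp add: field_simps)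
      thus "a / x * b \<in> R" using \<open>r \<in> R\<close> by simp
    qed
    moreover have "a / x \<noteq> 0" "v (a / x) = n - ee" using a x vdiv by auto
    ultimately have "n - ee \<in> V" unfolding V_iff by blast
    thus "n \<in> W" unfolding W_def by (rule image_eqI[rotated]) simp
  qed
next
  show "W \<subseteq> valset v (colon (smul_set x R) m)"
  proof
    fix n assume "n \<in> W"
    then obtain n' where n': "n' \<in> V" "n = ee + n'" unfolding W_def by blast
    then obtain a where a: "a \<in> colon R m" "a \<noteq> 0" "v a = n - ee" unfolding V_iff by auto
    have "x * a \<in> colon (smul_set x R) m" unfolding colon_iff
    proof
      fix b assume "b \<in> m"
      hence "a * b \<in> R" using a colon_iff by blast
      moreover have "x * a * b = x * (a * b)" by (simp add: mult.assoc)
      ultimately show "x * a * b \<in> smul_set x R" unfolding smul_set_def by blast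
    qed
    moreover have "x * a \<noteq> 0" "v (x * a) = n" using a x vmult by auto
    ultimately show "n \<in> valset v (colon (smul_set x R) m)" unfolding valset_iff by blast
  qed
qed

lemma xRm_zero: "colon (smul_set 0 R) m = {0}"
proof -
  obtain x' where x': "x' \<in> m" "x' \<noteq> 0" using xprime by blast
  have "smul_set 0 R = {0}" unfolding smul_set_def using R0 by force
  moreover have "a = 0" if a: "a \<in> colon {0} m" for a
  proof -
    have "a * x' \<in> {0}" using a x'(1) unfolding colon_iff by blast
    thus ?thesis using x'(2) by simp
  qed
  moreover have "0 \<in> colon {0} m" unfolding colon_iff by simp
  ultimately show ?thesis by auto
qed

end



theorem proposition1p11:
  fixes R m :: "'a::field set" and v :: "'a \<Rightarrow> int" and x :: 'a
  assumes subring: "subring R"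
    and quot_field: "quotient_field_is_K R"
    and noeth: "noetherian R"
    and dim1: "krull_dim_one R"
    and local: "local_ring R m"
    and dval: "discrete_valuation v"
    and int_closure: "\<forall>a. integral_over R a \<longleftrightarrow> a \<in> val_ring v"
    and finite_closure: "\<exists>F. finite F \<and> F \<subseteq> val_ring v \<and> val_ring v = gen_by R F"
    and res_rat: "residually_rational R v"
    and not_regular: "\<not> (\<exists>a\<in>m. m = smul_set a R)"
  defines "vR \<equiv> valset v R"
  defines "C \<equiv> colon R (val_ring v)"
  defines "e \<equiv> (LEAST e. e \<in> vR \<and> 0 < e)"
  defines "c \<equiv> (LEAST c. c \<in> vR \<and> (\<forall>n::nat. c + int n \<in> vR))"
  defines "r \<equiv> mod_length R (colon R m) R"
  assumes x_in: "x \<in> m" and vx: "v x = e"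
  defines "k \<equiv> mod_length R R (sum_set C (smul_set x R))"
  defines "xRm \<equiv> colon (smul_set x R) m"
  defines "Y \<equiv> {y \<in> vR. 0 < y \<and> y \<notin> valset v (sum_set C (smul_set x R))}"
  defines "y \<equiv> (\<lambda>i::nat. sorted_list_of_set Y ! (i - 1))"
  defines "p \<equiv> (THE p::int. c - e \<le> p * e \<and> p * e < c)"
  defines "h \<equiv> (p + 1) * e - c"
  defines "l \<equiv> (\<lambda>i::nat. THE l::int. 0 \<le> l \<and> y i + l * e < c \<and> c \<le> y i + (l + 1) * e)"
  assumes k_gt1: "k > 1"
  shows "(int r = e - int k \<longleftrightarrow> vR - valset v xRm = insert 0 (y ` {1..k-1}))
       \<and> (int r < e - 1 \<longrightarrow>
            2 * y 1 < c + e \<and> p \<le> 2 * l 1 + 2 \<and> (p = 2 * l 1 + 2 \<longrightarrow> 0 < h))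
       \<and> (int r = e - int k \<longrightarrow>
            (\<forall>j\<in>{1..k-1}. y 1 + y j < c + e) \<and> p \<le> l 1 + l (k - 1) + 2
            \<and> (p = l 1 + l (k - 1) + 2 \<longrightarrow> 0 < h))
       \<and> (3 \<le> p \<longrightarrow> (\<forall>i\<in>{1..k-1}. l i = 0 \<longrightarrow> c + e < 2 * y i))"
proof -
  interpret vr R m v
    by (rule vr.intro) (fact subring quot_field local dval int_closure finite_closure res_rat)+
  have vRS: "vR = S" unfolding vR_def S_def ..
  have CD: "C = Dge v cnd" unfolding C_def by (rule C_eq)
  have ee_e: "e = ee" unfolding e_def ee_def vRS ..
  have c_cnd: "c = cnd" unfolding c_def cnd_def vRS ..
  have r_card: "r = card (V - S)" unfolding r_def by (rule r_eq)
  have SW: "int (card (S - W)) = e - int r" using Ap_split ee_e r_card by simp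
  have epos: "0 < e" using ee_props(2) ee_e by simp
  have xR: "x \<in> R" using x_in m_props(1) by blast
  define VA where "VA = valset v (sum_set C (smul_set x R))"
  define X where "X = {s \<in> S. s < c \<and> s - e \<notin> S}"
  have SWX: "S - W \<subseteq> X" using SW_sub unfolding X_def ee_e c_cnd .
  have finX: "finite X"
  proof (rule finite_subset)
    show "X \<subseteq> {0..<c}" unfolding X_def using S_nonneg by auto
  qed simp
  have pp: "c - e \<le> p * e \<and> p * e < c" unfolding p_def using the_p[OF epos] .
  have SVA: "S - VA \<subseteq> {s \<in> S. s < c} \<and> finite (S - VA)"
  proof (cases "x = 0")
    case True
    have "S - VA = {s \<in> S. s < c}" unfolding VA_def CD True c_cnd by (rule k0_set)
    moreover have "finite {s \<in> S. s < c}"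
    proof (rule finite_subset)
      show "{s \<in> S. s < c} \<subseteq> {0..<c}" using S_nonneg by auto
    qed simp
    ultimately show ?thesis by simp
  next
    case False
    have "S - VA = X" unfolding VA_def CD X_def c_cnd ee_e
      using kx_set[OF x_in False] vx ee_e by simp
    thus ?thesis using finX unfolding X_def by auto
  qed
  have k_card: "k = card (S - VA)"
    unfolding k_def VA_def CD using k_len[OF xR] SVA unfolding VA_def CD by simp
  have Yeq: "Y = (S - VA) - {0}"
    unfolding Y_def VA_def vRS using S_nonneg by force
  have finY: "finite Y" using SVA Yeq by simp
  have cpos: "0 < c"
  proof -
    have "S - VA \<noteq> {}" using k_card k_gt1 by (metis card.empty not_less_zero zero_less_one less_trans)
    then obtain s where "s \<in> S - VA" by blast
    thus ?thesis using SVA S_nonneg by fastforce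
  qed
  have zeroSVA: "0 \<in> S - VA"
  proof -
    have "0 \<in> S" by (rule S0)
    moreover have "0 \<notin> VA"
    proof
      assume "0 \<in> VA"
      then obtain z where z: "z \<in> sum_set C (smul_set x R)" "z \<noteq> 0" "v z = 0"
        unfolding VA_def valset_iff by blast
      have "sum_set C (smul_set x R) \<subseteq> m"
      proof
        fix w assume "w \<in> sum_set C (smul_set x R)"
        then obtain d a where da: "w = d + x * a" "d \<in> Dge v cnd" "a \<in> R"
          unfolding sum_set_def smul_set_def CD by blast
        have "d \<in> m"
        proof (cases "d = 0")
          case True thus ?thesis using submodD(1)[OF m_props(2)] by simp
        next
          case False
          hence "cnd \<le> v d" using da unfolding Dge_def by simp
          thus ?thesis using in_m[of d] False da DR cpos c_cnd by auto
        qed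
        moreover have "x * a \<in> m" using submodD(3)[OF m_props(2) da(3) x_in] by (simp add: mult.commute)
        ultimately show "w \<in> m" using da submodD(2)[OF m_props(2)] by simp
      qed
      hence "z \<in> m" using z by blast
      thus False using m_pos[of z] z ee_props(2) by simp
    qed
    ultimately show ?thesis by blast
  qed
  have cardY: "card Y = k - 1" using Yeq k_card zeroSVA SVA by simp
  have Yprop: "\<forall>s\<in>Y. s \<in> S \<and> e \<le> s \<and> s < c"
  proof
    fix s assume "s \<in> Y"
    hence "s \<in> S" "s \<noteq> 0" "s < c" using Yeq SVA by auto
    thus "s \<in> S \<and> e \<le> s \<and> s < c" using ee_props(3)[of s] S_nonneg[of s] ee_e by simp
  qed
  have yY: "\<forall>i\<in>{1..k-1}. y i \<in> Y" unfolding y_def using ylist(1)[OF finY cardY] by simp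
  have yimg: "y ` {1..k-1} = Y" unfolding y_def using ylist(2)[OF finY cardY] by simp
  have y1min: "\<forall>s\<in>Y. y 1 \<le> s" unfolding y_def using ylist(3)[OF finY cardY k_gt1] by simp
  have lprop: "0 \<le> l i \<and> y i + l i * e < c \<and> c \<le> y i + (l i + 1) * e" if "i \<in> {1..k-1}" for i
  proof -
    have "y i < c" using yY Yprop that by blast
    thus ?thesis unfolding l_def using the_l[OF epos] by blast
  qed
  have one: "1 \<in> {1..k-1}" and km1: "k - 1 \<in> {1..k-1}" using k_gt1 by auto
  have part4: "3 \<le> p \<longrightarrow> (\<forall>i\<in>{1..k-1}. l i = 0 \<longrightarrow> c + e < 2 * y i)"
  proof (intro impI ballI)
    fix i assume p3: "3 \<le> p" and i: "i \<in> {1..k-1}" and l0: "l i = 0"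
    have "y i < c" "c \<le> y i + e" using lprop[OF i] l0 by auto
    thus "c + e < 2 * y i" using arith4[OF epos p3] pp by blast
  qed
  show ?thesis
  proof (cases "x = 0")
    case False
    have SVAX: "S - VA = X" unfolding VA_def CD X_def c_cnd ee_e
      using kx_set[OF x_in False] vx ee_e by simp
    have xRmW: "valset v xRm = W" unfolding xRm_def using xRm_val[OF x_in False] vx ee_e by simp
    have YX: "Y = X - {0}" using Yeq SVAX by simp
    have kX: "k = card X" using k_card SVAX by simp
    have zX: "0 \<in> X" using zeroSVA SVAX by simp
    have insY: "insert 0 (y ` {1..k-1}) = X" using yimg YX zX by auto
    have p1: "int r = e - int k \<longleftrightarrow> S - W = X"
    proof
      assume "int r = e - int k"
      hence "card (S - W) = card X" using SW kX by simp
      thus "S - W = X" using card_subset_eq[OF finX SWX] by simp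
    next
      assume "S - W = X"
      thus "int r = e - int k" using SW kX by simp
    qed
    have keyY: "s \<in> W" if s: "s \<in> Y" and big: "\<forall>s'\<in>Y. c + e \<le> s + s'" for s
    proof (rule key[OF x_in False])
      show "v x = ee" using vx ee_e by simp
      show "s \<in> S" "ee \<le> s" using Yprop s ee_e by auto
      show "\<forall>s'\<in>S. 0 < s' \<and> s' < cnd \<and> s' - ee \<notin> S \<longrightarrow> cnd + ee \<le> s + s'"
      proof (intro ballI impI)
        fix s' assume "s' \<in> S" "0 < s' \<and> s' < cnd \<and> s' - ee \<notin> S"
        hence "s' \<in> Y" unfolding YX X_def c_cnd ee_e by auto
        thus "cnd + ee \<le> s + s'" using big c_cnd ee_e by simp
      qed
    qed
    have part2: "int r < e - 1 \<longrightarrow> 2 * y 1 < c + e \<and> p \<le> 2 * l 1 + 2 \<and> (p = 2 * l 1 + 2 \<longrightarrow> 0 < h)"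
    proof
      assume rl: "int r < e - 1"
      have "\<exists>s\<in>S - W. s \<noteq> 0"
      proof (rule ccontr)
        assume "\<not> (\<exists>s\<in>S - W. s \<noteq> 0)"
        hence "S - W \<subseteq> {0}" by blast
        hence "card (S - W) \<le> 1" using card_mono[of "{0}" "S - W"] by simp
        thus False using SW rl by simp
      qed
      then obtain s where s: "s \<in> S - W" "s \<noteq> 0" by blast
      have sY: "s \<in> Y" using s SWX YX by blast
      have y2: "2 * y 1 < c + e"
      proof (rule ccontr)
        assume "\<not> 2 * y 1 < c + e"
        have "\<forall>s'\<in>Y. c + e \<le> s + s'"
        proof
          fix s' assume "s' \<in> Y"
          hence "y 1 \<le> s'" "y 1 \<le> s" using y1min sY by auto
          thus "c + e \<le> s + s'" using \<open>\<not> 2 * y 1 < c + e\<close> by linarith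
        qed
        hence "s \<in> W" using keyY sY by blast
        thus False using s by blast
      qed
      have "p \<le> 2 * l 1 + 2 \<and> (p = 2 * l 1 + 2 \<longrightarrow> 0 < (p + 1) * e - c)"
        using arith2[OF epos] pp lprop[OF one] y2 by blast
      thus "2 * y 1 < c + e \<and> p \<le> 2 * l 1 + 2 \<and> (p = 2 * l 1 + 2 \<longrightarrow> 0 < h)"
        using y2 unfolding h_def by blast
    qed
    have part3: "int r = e - int k \<longrightarrow> (\<forall>j\<in>{1..k-1}. y 1 + y j < c + e) \<and> p \<le> l 1 + l (k - 1) + 2
            \<and> (p = l 1 + l (k - 1) + 2 \<longrightarrow> 0 < h)"
    proof
      assume "int r = e - int k"
      hence SWeq: "S - W = X" using p1 by blast
      have yj: "\<forall>j\<in>{1..k-1}. y 1 + y j < c + e"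
      proof
        fix j assume j: "j \<in> {1..k-1}"
        have yjY: "y j \<in> Y" using yY j by blast
        show "y 1 + y j < c + e"
        proof (rule ccontr)
          assume "\<not> y 1 + y j < c + e"
          have "\<forall>s'\<in>Y. c + e \<le> y j + s'"
          proof
            fix s' assume "s' \<in> Y"
            hence "y 1 \<le> s'" using y1min by auto
            thus "c + e \<le> y j + s'" using \<open>\<not> y 1 + y j < c + e\<close> by linarith
          qed
          hence "y j \<in> W" using keyY yjY by blast
          moreover have "y j \<in> S - W" using yjY YX SWeq by blast
          ultimately show False by blast
        qed
      qed
      have "p \<le> l 1 + l (k - 1) + 2 \<and> (p = l 1 + l (k - 1) + 2 \<longrightarrow> 0 < (p + 1) * e - c)"
        using arith3[OF epos] pp lprop[OF one] lprop[OF km1] yj km1 by blast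
      thus "(\<forall>j\<in>{1..k-1}. y 1 + y j < c + e) \<and> p \<le> l 1 + l (k - 1) + 2
            \<and> (p = l 1 + l (k - 1) + 2 \<longrightarrow> 0 < h)" using yj unfolding h_def by blast
    qed
    show ?thesis using p1 part2 part3 part4 insY xRmW vRS by simp
  next
    case True
    have SVA0: "S - VA = {s \<in> S. s < c}" unfolding VA_def CD True c_cnd by (rule k0_set)
    have Y0: "Y = {s \<in> S. s < c} - {0}" using Yeq SVA0 by simp
    have "Y \<noteq> {}" using cardY k_gt1 by (metis card.empty diff_is_0_eq not_le)
    then obtain y0 where "y0 \<in> Y" by blast
    hence ec: "e < c" using Yprop by fastforce
    have eY: "e \<in> Y" unfolding Y0 using ee_props(1) ee_e ec epos by simp
    have y1e: "y 1 = e" using y1min eY Yprop yY one by force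
    have XX: "X \<subseteq> {s \<in> S. s < c} - {e}" unfolding X_def using S0 by auto
    have "card X \<le> card ({s \<in> S. s < c} - {e})"
      using card_mono[OF _ XX] SVA SVA0 by simp
    also have "\<dots> = k - 1" using k_card SVA0 eY Y0 SVA by simp
    finally have "card (S - W) \<le> k - 1" using card_mono[OF finX SWX] by simp
    hence rne: "int r \<noteq> e - int k" using SW k_gt1 by simp
    have xRm0: "valset v xRm = {}" unfolding xRm_def True xRm_zero valset_def by simp
    have "vR - valset v xRm \<noteq> insert 0 (y ` {1..k-1})"
    proof
      assume "vR - valset v xRm = insert 0 (y ` {1..k-1})"
      hence "finite S" using xRm0 vRS by (metis Diff_empty finite_atLeastAtMost finite_imageI finite_insert)
      thus False using S_infinite by simp
    qed
    hence p1: "int r = e - int k \<longleftrightarrow> vR - valset v xRm = insert 0 (y ` {1..k-1})" using rne by blast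
    have part2: "int r < e - 1 \<longrightarrow> 2 * y 1 < c + e \<and> p \<le> 2 * l 1 + 2 \<and> (p = 2 * l 1 + 2 \<longrightarrow> 0 < h)"
    proof
      have lp: "0 \<le> l 1" "c \<le> e + (l 1 + 1) * e" using lprop[OF one] y1e by auto
      have "p \<le> 2 * l 1 + 2 \<and> p \<noteq> 2 * l 1 + 2"
        using arith2z[OF epos _ lp] pp by blast
      thus "2 * y 1 < c + e \<and> p \<le> 2 * l 1 + 2 \<and> (p = 2 * l 1 + 2 \<longrightarrow> 0 < h)"
        using y1e ec by simp
    qed
    show ?thesis using p1 part2 part4 rne by blast
  qed
qed



end
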